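(* Let $m\in\mathbb{N}$ and let $X=\{a_1,\dots,a_n\}\subset\mathbb{R}^m$ be a finite point cloud with at least two points, equipped with the Euclidean metric $d_X$. Let $\rho_{\mathrm{UTD}}:X\to\mathcal{S}(\mathbb{C}^{m+1})$ be the uniformly transformed diagonal encoding $\rho_{\mathrm{UTD}}(x)=\sum_{j=1}^{m+1}\mathcal{T}_X(x)_j\,|j\rangle\langle j|$. Then for all $x,y\in X$, $$d_{\mathrm{HS}}\big(\rho_{\mathrm{UTD}}(x),\rho_{\mathrm{UTD}}(y)\big)=\frac{d_X(x,y)}{r(X)\sqrt{m(m+1)}}.$$
   Context: Let $\bar a=\frac1n\sum_{i=1}^n a_i$ be the mean of $X$, $\mathrm{diam}(X)=\max_{i,j}\lVert a_i-a_j\rVert$, and $r(X)=\mathrm{diam}(X)/2$. Let $R_m$ be the $(m+1)\times(m+1)$ orthogonal matrix with entries: for $i,j\in\{1,\dots,m\}$, $(R_m)_{ii}=\frac{1+(m-1)\sqrt{m+1}}{m\sqrt{m+1}}$ and $(R_m)_{ij}=\frac{1-\sqrt{m+1}}{m\sqrt{m+1}}$ for $i\ne j$; $(R_m)_{m+1,j}=-\frac{1}{\sqrt{m+1}}$ for $j\in\{1,\dots,m\}$; and $(R_m)_{i,m+1}=\frac{1}{\sqrt{m+1}}$ for all $i\in\{1,\dots,m+1\}$. The uniform transformation $\mathcal{T}_X:\mathbb{R}^m\to\mathbb{R}^{m+1}$ associated with $X$ is $$\mathcal{T}_X(x)=\frac{1}{r(X)\sqrt{m(m+1)}}\,R_m\begin{bmatrix}x-\bar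 a\\0\end{bmatrix}+\frac{1}{m+1}\mathbf{1}_{m+1},$$ where $\mathbf{1}_{m+1}$ is the all-ones vector (this maps $X$ into the probability simplex $\Delta^m=\{p\in\mathbb{R}^{m+1}:p_j\ge0,\ \sum_j p_j=1\}$). $|1\rangle,\dots,|m+1\rangle$ is the standard basis of $\mathbb{C}^{m+1}$, $\mathcal{S}(\mathbb{C}^{m+1})$ the set of density matrices, and $d_{\mathrm{HS}}(\rho,\sigma)=\sqrt{\mathrm{Tr}[(\rho-\sigma)^\dagger(\rho-\sigma)]}$ is the Hilbert--Schmidt distance. *)

theory Defs
  imports Complex_Main
begin

text \<open>Points of R^m are functions nat => real, coordinates indexed by 1..m
  (and identically zero outside 1..m). Vectors/matrices of C^(d) use indices 1..d.\<close>

definition in_Rm :: "nat \<Rightarrow> (nat \<Rightarrow> real) \<Rightarrow> bool" where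
  "in_Rm m a \<longleftrightarrow> (\<forall>i. i \<notin> {1..m} \<longrightarrow> a i = 0)"

definition eucl_dist :: "nat \<Rightarrow> (nat \<Rightarrow> real) \<Rightarrow> (nat \<Rightarrow> real) \<Rightarrow> real" where
  "eucl_dist m x y = sqrt (\<Sum>i=1..m. (x i - y i)^2)"

definition mean_pt :: "(nat \<Rightarrow> real) set \<Rightarrow> (nat \<Rightarrow> real)" where
  "mean_pt X = (\<lambda>i. (\<Sum>a\<in>X. a i) / real (card X))"

definition diam_pc :: "nat \<Rightarrow> (nat \<Rightarrow> real) set \<Rightarrow> real" where
  "diam_pc m X = Max {eucl_dist m a b | a b. a \<in> X \<and> b \<in> X}"

definition rad_pc :: "nat \<Rightarrow> (nat \<Rightarrow> real) set \<Rightarrow> real" where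
  "rad_pc m X = diam_pc m X / 2"

definition R_mat :: "nat \<Rightarrow> nat \<Rightarrow> nat \<Rightarrow> real" where
  "R_mat m i j =
     (if i \<in> {1..m} \<and> j \<in> {1..m} then
        (if i = j then (1 + (real m - 1) * sqrt (real m + 1)) / (real m * sqrt (real m + 1))
         else (1 - sqrt (real m + 1)) / (real m * sqrt (real m + 1)))
      else if i = m + 1 \<and> j \<in> {1..m} then - 1 / sqrt (real m + 1)
      else if i \<in> {1..m+1} \<and> j = m + 1 then 1 / sqrt (real m + 1)
      else 0)"

definition unif_transf :: "nat \<Rightarrow> (nat \<Rightarrow> real) set \<Rightarrow> (nat \<Rightarrow> real) \<Rightarrow> (nat \<Rightarrow> real)" where
  "unif_transf m X x = (\<lambda>i. if i \<in> {1..m+1} then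
      (1 / (rad_pc m X * sqrt (real m * (real m + 1)))) *
        (\<Sum>j=1..m+1. R_mat m i j * (if j \<le> m then x j - mean_pt X j else 0))
      + 1 / (real m + 1)
    else 0)"

definition ket :: "nat \<Rightarrow> nat \<Rightarrow> complex" where
  "ket j = (\<lambda>i. if i = j then 1 else 0)"

definition outer :: "(nat \<Rightarrow> complex) \<Rightarrow> (nat \<Rightarrow> complex) \<Rightarrow> nat \<Rightarrow> nat \<Rightarrow> complex" where
  "outer u v = (\<lambda>i k. u i * cnj (v k))"

definition rho_UTD :: "nat \<Rightarrow> (nat \<Rightarrow> real) set \<Rightarrow> (nat \<Rightarrow> real) \<Rightarrow> nat \<Rightarrow> nat \<Rightarrow> complex" where
  "rho_UTD m X x = (\<lambda>i k. \<Sum>j=1..m+1. complex_of_real (unif_transf m X x j) * outer (ket j) (ket j) i k)"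

definition mat_adj :: "(nat \<Rightarrow> nat \<Rightarrow> complex) \<Rightarrow> nat \<Rightarrow> nat \<Rightarrow> complex" where
  "mat_adj A = (\<lambda>i k. cnj (A k i))"

definition mat_mul :: "nat \<Rightarrow> (nat \<Rightarrow> nat \<Rightarrow> complex) \<Rightarrow> (nat \<Rightarrow> nat \<Rightarrow> complex) \<Rightarrow> nat \<Rightarrow> nat \<Rightarrow> complex" where
  "mat_mul d A B = (\<lambda>i k. \<Sum>l=1..d. A i l * B l k)"

definition mat_trace :: "nat \<Rightarrow> (nat \<Rightarrow> nat \<Rightarrow> complex) \<Rightarrow> complex" where
  "mat_trace d A = (\<Sum>i=1..d. A i i)"

text \<open>Hilbert-Schmidt distance of d x d matrices (the trace is real and nonnegative).\<close>
definition d_HS :: "nat \<Rightarrow> (nat \<Rightarrow> nat \<Rightarrow> complex) \<Rightarrow> (nat \<Rightarrow> nat \<Rightarrow> complex) \<Rightarrow> real" where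
  "d_HS d \<rho> \<sigma> = sqrt (Re (mat_trace d (mat_mul d (mat_adj (\<lambda>i k. \<rho> i k - \<sigma> i k)) (\<lambda>i k. \<rho> i k - \<sigma> i k))))"

end

theory Submission
  imports Defs
begin

lemma rho_diag:
  "rho_UTD m X x i k = (if i = k \<and> i \<in> {1..m+1} then complex_of_real (unif_transf m X x i) else 0)"
proof -
  have "rho_UTD m X x i k = (\<Sum>j=1..m+1. if j = i then (if i = k then complex_of_real (unif_transf m X x i) else 0) else 0)"
    unfolding rho_UTD_def outer_def ket_def by (intro sum.cong) auto
  also have "\<dots> = (if i = k \<and> i \<in> {1..m+1} then complex_of_real (unif_transf m X x i) else 0)"
    by (subst sum.delta) auto
  finally show ?thesis .
qed

lemma trace_eq:
  "Re (mat_trace (m+1) (mat_mul (m+1) (mat_adj (\<lambda>i k. rho_UTD m X x i k - rho_UTD m X y i k))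
      (\<lambda>i k. rho_UTD m X x i k - rho_UTD m X y i k)))
   = (\<Sum>i=1..m+1. (unif_transf m X x i - unif_transf m X y i)^2)"
proof -
  define D where "D i = unif_transf m X x i - unif_transf m X y i" for i
  have "mat_trace (m+1) (mat_mul (m+1) (mat_adj (\<lambda>i k. rho_UTD m X x i k - rho_UTD m X y i k))
      (\<lambda>i k. rho_UTD m X x i k - rho_UTD m X y i k))
     = (\<Sum>i=1..m+1. \<Sum>l=1..m+1. if l = i then complex_of_real ((D i)^2) else 0)"
    unfolding mat_trace_def mat_mul_def mat_adj_def rho_diag D_def
    by (intro sum.cong refl) (auto simp: power2_eq_square)
  also have "\<dots> = (\<Sum>i=1..m+1. complex_of_real ((D i)^2))"
    by (intro sum.cong refl) (subst sum.delta, auto)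
  finally show ?thesis by (simp add: D_def)
qed

lemma R_norm:
  fixes w :: "nat \<Rightarrow> real"
  assumes m: "m \<ge> 1"
  shows "(\<Sum>i=1..m+1. (\<Sum>j=1..m+1. R_mat m i j * (if j \<le> m then w j else 0))^2) = (\<Sum>i=1..m. (w i)^2)"
proof -
  define s where "s = sqrt (real m + 1)"
  define b where "b = (1 - s) / (real m * s)"
  define S where "S = (\<Sum>j=1..m. w j)"
  have s2: "s^2 = real m + 1" unfolding s_def by simp
  have spos: "s > 0" unfolding s_def by simp
  have mpos: "real m > 0" using m by simp
  have diag: "(1 + (real m - 1) * s) / (real m * s) = b + 1"
    unfolding b_def using spos mpos by (simp add: field_simps)
  have row: "(\<Sum>j=1..m+1. R_mat m i j * (if j \<le> m then w j else 0)) = w i + b * S"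
    if i: "i \<in> {1..m}" for i
  proof -
    have "(\<Sum>j=1..m+1. R_mat m i j * (if j \<le> m then w j else 0)) = (\<Sum>j=1..m. R_mat m i j * w j)"
      by (simp add: sum.atLeast1_atMost_eq[symmetric] del: sum.atLeast1_atMost_eq)
    also have "\<dots> = (\<Sum>j=1..m. b * w j + (if j = i then w j else 0))"
    proof (intro sum.cong refl)
      fix j assume j: "j \<in> {1..m}"
      show "R_mat m i j * w j = b * w j + (if j = i then w j else 0)"
      proof (cases "j = i")
        case True
        have "R_mat m i j = b + 1" using i j True diag unfolding R_mat_def s_def by simp
        thus ?thesis using True by (simp add: algebra_simps)
      next
        case False
        have "R_mat m i j = b" using i j False unfolding R_mat_def s_def b_def by simp
        thus ?thesis using False by simp
      qed
    qed
    also have "\<dots> = w i + b * S"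
      using i by (simp add: sum.distrib sum_distrib_left S_def)
    finally show ?thesis .
  qed
  have last: "(\<Sum>j=1..m+1. R_mat m (m+1) j * (if j \<le> m then w j else 0)) = - S / s"
  proof -
    have "(\<Sum>j=1..m+1. R_mat m (m+1) j * (if j \<le> m then w j else 0)) = (\<Sum>j=1..m. R_mat m (m+1) j * w j)"
      by simp
    also have "\<dots> = (\<Sum>j=1..m. (-1/s) * w j)"
      by (intro sum.cong refl) (auto simp: R_mat_def s_def)
    also have "\<dots> = - S / s" by (simp add: sum_negf sum_divide_distrib S_def)
    finally show ?thesis .
  qed
  have "(\<Sum>i=1..m+1. (\<Sum>j=1..m+1. R_mat m i j * (if j \<le> m then w j else 0))^2)
     = (\<Sum>i=1..m. (w i + b * S)^2) + (S/s)^2"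
    using row last by simp
  also have "(\<Sum>i=1..m. (w i + b * S)^2) = (\<Sum>i=1..m. (w i)^2 + (2*b*S) * w i + (b*S)^2)"
    by (intro sum.cong refl) (simp add: algebra_simps power2_eq_square)
  also have "\<dots> = (\<Sum>i=1..m. (w i)^2) + (2*b*S) * S + real m * (b*S)^2"
    by (simp add: sum.distrib sum_distrib_left[symmetric] S_def)
  also have "\<dots> + (S/s)^2 = (\<Sum>i=1..m. (w i)^2) + S^2 * (2*b + real m * b^2 + 1/s^2)"
    by (simp add: power_divide algebra_simps power2_eq_square)
  also have "2*b + real m * b^2 + 1/s^2 = 0"
  proof -
    have "(2*b + real m * b^2 + 1/s^2) * (real m * s^2) = 2*(1-s)*s + (1-s)^2 + real m"
      unfolding b_def using spos mpos by (simp add: field_simps power2_eq_square)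
    also have "\<dots> = 1 - s^2 + real m" by (simp add: algebra_simps power2_eq_square)
    also have "\<dots> = 0" using s2 by simp
    finally show ?thesis using spos mpos by simp
  qed
  finally show ?thesis by simp
qed

theorem mainTheorem2:
  fixes m :: nat and X :: "(nat \<Rightarrow> real) set" and x y :: "nat \<Rightarrow> real"
  assumes "finite X" and "card X \<ge> 2" and "\<forall>a\<in>X. in_Rm m a"
    and "x \<in> X" and "y \<in> X"
  shows "d_HS (m + 1) (rho_UTD m X x) (rho_UTD m X y)
           = eucl_dist m x y / (rad_pc m X * sqrt (real m * (real m + 1)))"
proof -
  have m: "m \<ge> 1"
  proof (rule ccontr)
    assume "\<not> m \<ge> 1"
    hence m0: "m = 0" by simp
    have "X \<subseteq> {(\<lambda>_. 0)}"
      using assms(3) by (auto simp: in_Rm_def m0 fun_eq_iff)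
    hence "card X \<le> card {(\<lambda>_::nat. 0::real)}" by (intro card_mono) auto
    thus False using assms(2) by simp
  qed
  define c where "c = 1 / (rad_pc m X * sqrt (real m * (real m + 1)))"
  have fin: "finite {eucl_dist m a b | a b. a \<in> X \<and> b \<in> X}"
  proof -
    have "{eucl_dist m a b | a b. a \<in> X \<and> b \<in> X} = (\<lambda>(a,b). eucl_dist m a b) ` (X \<times> X)" by auto
    thus ?thesis using assms(1) by simp
  qed
  have "eucl_dist m x x \<le> diam_pc m X"
    unfolding diam_pc_def using fin assms(4) by (intro Max_ge) auto
  hence "rad_pc m X \<ge> 0" by (simp add: rad_pc_def eucl_dist_def)
  hence c0: "c \<ge> 0" unfolding c_def by simp
  have diff: "unif_transf m X x i - unif_transf m X y i
      = c * (\<Sum>j=1..m+1. R_mat m i j * (if j \<le> m then x j - y j else 0))"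
    if "i \<in> {1..m+1}" for i
  proof -
    have "(\<Sum>j=1..m+1. R_mat m i j * (if j \<le> m then x j - mean_pt X j else 0))
        - (\<Sum>j=1..m+1. R_mat m i j * (if j \<le> m then y j - mean_pt X j else 0))
        = (\<Sum>j=1..m+1. R_mat m i j * (if j \<le> m then x j - y j else 0))"
      by (simp only: sum_subtractf[symmetric], intro sum.cong refl, simp add: algebra_simps)
    thus ?thesis using that unfolding unif_transf_def c_def
      by (simp add: diff_divide_distrib[symmetric] del: sum.cl_ivl_Suc)
  qed
  have "(\<Sum>i=1..m+1. (unif_transf m X x i - unif_transf m X y i)^2)
      = (\<Sum>i=1..m+1. c^2 * (\<Sum>j=1..m+1. R_mat m i j * (if j \<le> m then x j - y j else 0))^2)"
    by (intro sum.cong refl) (simp add: diff power_mult_distrib)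
  also have "\<dots> = c^2 * (\<Sum>i=1..m. (x i - y i)^2)"
    by (simp only: sum_distrib_left[symmetric] R_norm[OF m, of "\<lambda>j. x j - y j"])
  finally have "d_HS (m + 1) (rho_UTD m X x) (rho_UTD m X y) = sqrt (c^2 * (\<Sum>i=1..m. (x i - y i)^2))"
    unfolding d_HS_def trace_eq by simp
  also have "\<dots> = c * eucl_dist m x y"
    using c0 by (simp add: real_sqrt_mult eucl_dist_def)
  finally show ?thesis by (simp add: c_def)
qed

end
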